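(* Let $m,K\ge1$ be integers, $q\in[1,\infty]$, $a_0\ge 0$, $a,b,C_0,M>0$, $L,L_K\ge0$, and let $\bar\Gamma=\{(x,Y):x\in[a_0,a_0+a],\ Y\in\mathbb{R}^m,\ |Y|_2\le b+C_0\}$ and $\mathbb B_q(1)=\{\theta\in\mathbb{R}^K:|\theta|_q\le1\}$. Let $f(x,Y;\theta)$ be defined for $(x,Y)\in\bar\Gamma$, $\theta\in\mathbb B_q(1)$, such that for each $\theta$, $f(\cdot,\cdot;\theta)$ is continuous on $\bar\Gamma$ with $\max_{\bar\Gamma}|f(x,Y;\theta)|\le M$, and $$|f(x,Y;\theta)-f(x,\tilde Y;\theta)|\le L|Y-\tilde Y|_2,\qquad |f(x,Y;\theta)-f(x,Y;\theta')|\le L_K|\theta-\theta'|_q$$ for all $(x,Y),(x,\tilde Y)\in\bar\Gamma$ and $\theta,\theta'\in\mathbb B_q(1)$. Let $\alpha=\min\{a,b/M\}$ and assume that for every $\theta\in\mathbb B_q(1)$ and every initial vector $Y_0\in\mathbb{R}^m$ with $|Y_0|_2\le C_0$, the ODE $y^{(m)}(x)=f(x,Y(x);\theta)$, $Y(a_0)=Y_0$, where $Y(x)=(y(x),\dots,y^{(m-1)}(x))$, has a solution on $[a_0,a_0+\alpha]$ with $(x,Y(x))\in\bar\Gamma$. Let $\mathcal Y$ be the class of these solutions on $[a_0,a_0+\alpha]$ as $\theta$ ranges over $\mathbb B_q(1)$ and $Y_0$ over $\{|Y_0|_2\le C_0\}$, and let $$L_{\max}=\sup_{x\in[a_0,a_0+\alpha]}\Big\{\exp\big(x\sqrt{L^2+1}\big)\Big[1+\int_0^x\exp\big(-s\sqrt{L^2+1}\big)ds\Big]\Big\}.$$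 Then for every $\delta>0$, $$\log N_\infty(\delta,\mathcal Y)\le K\log\Big(1+\frac{2L_{\max}L_K}{\delta}\Big)+m\log\Big(\frac{2C_0L_{\max}}{\delta}+1\Big).$$
   Context: $N_\infty(\delta,\mathcal Y)$ is the smallest cardinality of a subset $\{y^1,\dots,y^N\}\subset\mathcal Y$ such that every $y\in\mathcal Y$ satisfies $\sup_{x\in[a_0,a_0+\alpha]}|y(x)-y^i(x)|\le\delta$ for some $i$. $|\theta|_q$ is the $\ell_q$ norm. *)

theory Defs
  imports "HOL-Analysis.Analysis"
begin

text \<open>Vectors in R^n are represented as functions nat => real, vanishing
  from index n onwards.\<close>

definition is_vec :: "nat \<Rightarrow> (nat \<Rightarrow> real) \<Rightarrow> bool" where
  "is_vec n v \<longleftrightarrow> (\<forall>i\<ge>n. v i = 0)"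

definition norm2 :: "nat \<Rightarrow> (nat \<Rightarrow> real) \<Rightarrow> real" where
  "norm2 n v = sqrt (\<Sum>i<n. (v i)\<^sup>2)"

definition lq_norm :: "ereal \<Rightarrow> nat \<Rightarrow> (nat \<Rightarrow> real) \<Rightarrow> real" where
  "lq_norm q n v =
     (if q = \<infinity> then (if n = 0 then 0 else Max ((\<lambda>i. \<bar>v i\<bar>) ` {..<n}))
      else (\<Sum>i<n. \<bar>v i\<bar> powr real_of_ereal q) powr (1 / real_of_ereal q))"

definition lq_ball :: "ereal \<Rightarrow> nat \<Rightarrow> (nat \<Rightarrow> real) set" where
  "lq_ball q K = {\<theta>. is_vec K \<theta> \<and> lq_norm q K \<theta> \<le> 1}"

definition Gamma :: "nat \<Rightarrow> real \<Rightarrow> real \<Rightarrow> real \<Rightarrow> real \<Rightarrow> (real \<times> (nat \<Rightarrow> real)) set" where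
  "Gamma m a0 a b C0 = {(x, Y). x \<in> {a0..a0 + a} \<and> is_vec m Y \<and> norm2 m Y \<le> b + C0}"

definition cont_on_Gamma :: "nat \<Rightarrow> (real \<times> (nat \<Rightarrow> real)) set \<Rightarrow> (real \<Rightarrow> (nat \<Rightarrow> real) \<Rightarrow> real) \<Rightarrow> bool" where
  "cont_on_Gamma m G g \<longleftrightarrow>
     (\<forall>(x, Y)\<in>G. \<forall>\<epsilon>>0. \<exists>d>0. \<forall>(x', Y')\<in>G.
        sqrt ((x - x')\<^sup>2 + (norm2 m (\<lambda>i. Y i - Y' i))\<^sup>2) < d \<longrightarrow> \<bar>g x Y - g x' Y'\<bar> < \<epsilon>)"

text \<open>y solves y^(m) = f(x, Y(x); theta), Y(a0) = Y0 on [a0, a0+alpha], with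
  (x, Y(x)) in G; Ys j is the j-th derivative of y.\<close>
definition is_solution ::
  "nat \<Rightarrow> (real \<Rightarrow> (nat \<Rightarrow> real) \<Rightarrow> (nat \<Rightarrow> real) \<Rightarrow> real) \<Rightarrow> (real \<times> (nat \<Rightarrow> real)) set \<Rightarrow>
   (nat \<Rightarrow> real) \<Rightarrow> (nat \<Rightarrow> real) \<Rightarrow> real \<Rightarrow> real \<Rightarrow> (real \<Rightarrow> real) \<Rightarrow> bool" where
  "is_solution m f G \<theta> Y0 a0 \<alpha> y \<longleftrightarrow>
     (\<exists>Ys :: nat \<Rightarrow> real \<Rightarrow> real.
        let I = {a0..a0 + \<alpha>}; St = (\<lambda>x j. if j < m then Ys j x else 0) in
        (\<forall>x\<in>I. Ys 0 x = y x) \<and>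
        (\<forall>x\<in>I. \<forall>j. Suc j < m \<longrightarrow> (Ys j has_real_derivative Ys (Suc j) x) (at x within I)) \<and>
        (\<forall>x\<in>I. (Ys (m - 1) has_real_derivative f x (St x) \<theta>) (at x within I)) \<and>
        St a0 = Y0 \<and>
        (\<forall>x\<in>I. (x, St x) \<in> G))"

text \<open>N_infinity(delta, Ys): smallest cardinality of a finite delta-cover in sup norm
  over I by elements of the class (infinity if no finite cover exists).\<close>
definition covering_number :: "real \<Rightarrow> real set \<Rightarrow> (real \<Rightarrow> real) set \<Rightarrow> enat" where
  "covering_number \<delta> I \<Y> = Inf {enat (card C) | C. finite C \<and> C \<subseteq> \<Y> \<and>
       (\<forall>y\<in>\<Y>. \<exists>c\<in>C. \<forall>x\<in>I. \<bar>y x - c x\<bar> \<le> \<delta>)}"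

end

theory Submission
  imports Defs
begin

lemma powr_convex0:
  fixes p u w l :: real
  assumes "p \<ge> 1" "0 \<le> u" "0 \<le> w" "0 \<le> l" "l \<le> 1"
  shows "(l*u + (1-l)*w) powr p \<le> l * u powr p + (1-l) * w powr p"
proof -
  have sub: "t powr p \<le> t" if "0 \<le> t" "t \<le> 1" for t :: real
    using that assms(1) by (metis powr_mono' powr_one_eq_one powr_one_gt_zero_iff order.refl)
  consider "u > 0" "w > 0" | "u = 0" | "w = 0" using assms by linarith
  then show ?thesis
  proof cases
    case 1
    show ?thesis using convex_onD[OF powr_convex[OF assms(1)], of "1-l" u w] 1 assms by auto
  next
    case 2
    have "((1-l)*w) powr p = (1-l) powr p * w powr p" using assms by (simp add: powr_mult)
    also have "\<dots> \<le> (1-l) * w powr p" using sub[of "1-l"] assms by (intro mult_right_mono) auto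
    finally show ?thesis using 2 by simp
  next
    case 3
    have "(l*u) powr p = l powr p * u powr p" using assms by (simp add: powr_mult)
    also have "\<dots> \<le> l * u powr p" using sub[of "l"] assms by (intro mult_right_mono) auto
    finally show ?thesis using 3 by simp
  qed
qed

lemma lq_fin: "q \<noteq> \<infinity> \<Longrightarrow> lq_norm q n v = (\<Sum>i<n. \<bar>v i\<bar> powr real_of_ereal q) powr (1 / real_of_ereal q)"
  by (simp add: lq_norm_def)

lemma lq_inf: "lq_norm \<infinity> n v = (if n = 0 then 0 else Max ((\<lambda>i. \<bar>v i\<bar>) ` {..<n}))"
  by (simp add: lq_norm_def)

lemma q_real: assumes "1 \<le> q" "q \<noteq> \<infinity>" shows "1 \<le> real_of_ereal q"
  using assms by (cases q) auto

lemma lq_local: "(\<And>i. i<n \<Longrightarrow> x i = y i) \<Longrightarrow> lq_norm q n x = lq_norm q n y"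
  unfolding lq_norm_def by (auto intro!: sum.cong image_cong)

lemma lq_nonneg: "0 \<le> lq_norm q n x"
proof (cases "q = \<infinity>")
  case True
  show ?thesis
  proof (cases "n = 0")
    case False
    then show ?thesis using True False by (simp add: lq_inf, subst Max_ge_iff, auto)
  qed (simp add: True lq_inf)
qed (simp add: lq_fin)

lemma lq_hom: assumes "1 \<le> q" shows "lq_norm q n (\<lambda>i. c * x i) = \<bar>c\<bar> * lq_norm q n x"
proof (cases "q = \<infinity>")
  case True
  show ?thesis
  proof (cases "n = 0")
    case False
    have "Max ((\<lambda>i. \<bar>c * x i\<bar>) ` {..<n}) = Max ((\<lambda>y. \<bar>c\<bar> * y) ` ((\<lambda>i. \<bar>x i\<bar>) ` {..<n}))"
      by (simp add: image_image abs_mult)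
    also have "\<dots> = \<bar>c\<bar> * Max ((\<lambda>i. \<bar>x i\<bar>) ` {..<n})"
      using False by (intro mono_Max_commute[symmetric]) (auto simp: mono_def mult_left_mono)
    finally show ?thesis using True False by (simp add: lq_inf)
  qed (simp add: True lq_inf)
next
  case False
  define p where "p = real_of_ereal q"
  have p: "1 \<le> p" using q_real[OF assms False] p_def by simp
  have "(\<Sum>i<n. \<bar>c * x i\<bar> powr p) = \<bar>c\<bar> powr p * (\<Sum>i<n. \<bar>x i\<bar> powr p)"
    by (simp add: abs_mult powr_mult sum_distrib_left)
  then have "(\<Sum>i<n. \<bar>c * x i\<bar> powr p) powr (1/p) = (\<bar>c\<bar> powr p) powr (1/p) * (\<Sum>i<n. \<bar>x i\<bar> powr p) powr (1/p)"
    by (simp add: powr_mult sum_nonneg)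
  also have "(\<bar>c\<bar> powr p) powr (1/p) = \<bar>c\<bar>" using p by (simp add: powr_powr)
  finally show ?thesis using False by (simp add: lq_fin p_def)
qed

lemma lq_coord: assumes "1 \<le> q" "i < n" shows "\<bar>x i\<bar> \<le> lq_norm q n x"
proof (cases "q = \<infinity>")
  case True
  then show ?thesis using assms by (auto simp: lq_inf intro!: Max_ge)
next
  case False
  define p where "p = real_of_ereal q"
  have p: "1 \<le> p" using q_real[OF assms(1) False] p_def by simp
  have "\<bar>x i\<bar> powr p \<le> (\<Sum>i<n. \<bar>x i\<bar> powr p)"
    using assms(2) by (intro member_le_sum) auto
  then have "(\<bar>x i\<bar> powr p) powr (1/p) \<le> (\<Sum>i<n. \<bar>x i\<bar> powr p) powr (1/p)"
    using p by (intro powr_mono2) auto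
  then show ?thesis using p False by (simp add: lq_fin p_def powr_powr)
qed

lemma powr_le1: "0 \<le> x \<Longrightarrow> x \<le> 1 \<Longrightarrow> 0 \<le> e \<Longrightarrow> x powr e \<le> (1::real)"
  by (metis powr_mono2 powr_one_eq_one)

lemma lq_small: assumes "1 \<le> q" "\<And>i. i < n \<Longrightarrow> \<bar>x i\<bar> \<le> 1 / real n" shows "lq_norm q n x \<le> 1"
proof (cases "q = \<infinity>")
  case True
  show ?thesis
  proof (cases "n = 0")
    case False
    have "\<forall>y\<in>(\<lambda>i. \<bar>x i\<bar>) ` {..<n}. y \<le> 1"
    proof
      fix y assume "y \<in> (\<lambda>i. \<bar>x i\<bar>) ` {..<n}"
      then obtain i where "i < n" "y = \<bar>x i\<bar>" by auto
      moreover have "1 / real n \<le> 1" using False by simp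
      ultimately show "y \<le> 1" using assms(2)[of i] by linarith
    qed
    then show ?thesis using True False by (simp add: lq_inf, subst Max_le_iff, auto)
  qed (simp add: True lq_inf)
next
  case False
  define p where "p = real_of_ereal q"
  have p: "1 \<le> p" using q_real[OF assms(1) False] p_def by simp
  have "(\<Sum>i<n. \<bar>x i\<bar> powr p) \<le> (\<Sum>i<n. 1 / real n)"
  proof (intro sum_mono)
    fix i assume i: "i \<in> {..<n}"
    then have n: "n > 0" by auto
    have "1 / real n \<le> 1" using n by simp
    moreover have "\<bar>x i\<bar> \<le> 1 / real n" using assms(2) i by auto
    ultimately have "\<bar>x i\<bar> \<le> 1" by linarith
    then have "\<bar>x i\<bar> powr p \<le> \<bar>x i\<bar> powr 1"
      using p by (intro powr_mono') auto
    then show "\<bar>x i\<bar> powr p \<le> 1 / real n" using assms(2)[of i] i by simp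
  qed
  also have "\<dots> \<le> 1" by simp
  finally have "(\<Sum>i<n. \<bar>x i\<bar> powr p) powr (1/p) \<le> 1"
    using p by (intro powr_le1) (auto simp: sum_nonneg)
  then show ?thesis using False by (simp add: lq_fin p_def)
qed

lemma lq_zero_iff: assumes "1 \<le> q" shows "lq_norm q n x = 0 \<longleftrightarrow> (\<forall>i<n. x i = 0)"
proof
  assume "lq_norm q n x = 0"
  then show "\<forall>i<n. x i = 0" using lq_coord[OF assms, of _ n x] by fastforce
next
  assume "\<forall>i<n. x i = 0"
  then have "lq_norm q n x = lq_norm q n (\<lambda>i. 0 * x i)" by (intro lq_local) auto
  moreover have "lq_norm q n (\<lambda>i. 0 * x i) = 0" using lq_hom[OF assms, of n 0 x] by simp
  ultimately show "lq_norm q n x = 0" by simp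
qed

lemma lq_tri: assumes "1 \<le> q" shows "lq_norm q n (\<lambda>i. x i + y i) \<le> lq_norm q n x + lq_norm q n y"
proof (cases "q = \<infinity>")
  case True
  show ?thesis
  proof (cases "n = 0")
    case False
    have "\<forall>z\<in>(\<lambda>i. \<bar>x i + y i\<bar>) ` {..<n}. z \<le> lq_norm q n x + lq_norm q n y"
    proof
      fix z assume "z \<in> (\<lambda>i. \<bar>x i + y i\<bar>) ` {..<n}"
      then obtain i where "i < n" "z = \<bar>x i + y i\<bar>" by auto
      then show "z \<le> lq_norm q n x + lq_norm q n y"
        using lq_coord[OF assms, of i n x] lq_coord[OF assms, of i n y] by linarith
    qed
    then show ?thesis using True False by (simp add: lq_inf, subst Max_le_iff, auto)
  qed (simp add: True lq_inf)
next
  case False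
  define p where "p = real_of_ereal q"
  have p: "1 \<le> p" using q_real[OF assms(1) False] p_def by simp
  define \<Phi> where "\<Phi> v = (\<Sum>i<n. \<bar>v i\<bar> powr p)" for v :: "nat \<Rightarrow> real"
  have N: "lq_norm q n v = \<Phi> v powr (1/p)" for v using False by (simp add: lq_fin p_def \<Phi>_def)
  have \<Phi>nn: "0 \<le> \<Phi> v" for v by (simp add: \<Phi>_def sum_nonneg)
  have \<Phi>N: "\<Phi> v = lq_norm q n v powr p" for v using p \<Phi>nn[of v] by (simp add: N powr_powr)
  define a where "a = lq_norm q n x"
  define b where "b = lq_norm q n y"
  show ?thesis
  proof (cases "a = 0 \<or> b = 0")
    case True
    then show ?thesis
    proof
      assume "a = 0"
      then have "lq_norm q n (\<lambda>i. x i + y i) = lq_norm q n y"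
        using lq_zero_iff[OF assms] a_def by (intro lq_local) auto
      then show ?thesis using \<open>a = 0\<close> a_def by simp
    next
      assume "b = 0"
      then have "lq_norm q n (\<lambda>i. x i + y i) = lq_norm q n x"
        using lq_zero_iff[OF assms] b_def by (intro lq_local) auto
      then show ?thesis using \<open>b = 0\<close> b_def by simp
    qed
  next
    case False
    then have a: "a > 0" and b: "b > 0" using lq_nonneg a_def b_def by (auto simp: order_le_less)
    define l where "l = a / (a + b)"
    have l: "0 \<le> l" "l \<le> 1" "1 - l = b / (a+b)" using a b by (auto simp: l_def field_simps)
    have \<Phi>x: "\<Phi> (\<lambda>i. (1/a) * x i) = 1"
    proof -
      have "\<Phi> (\<lambda>i. (1/a) * x i) = lq_norm q n (\<lambda>i. (1/a) * x i) powr p" by (rule \<Phi>N)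
      also have "lq_norm q n (\<lambda>i. (1/a) * x i) = 1" using a lq_hom[OF assms, of n "1/a" x] by (simp add: a_def)
      finally show ?thesis by simp
    qed
    have \<Phi>y: "\<Phi> (\<lambda>i. (1/b) * y i) = 1"
    proof -
      have "\<Phi> (\<lambda>i. (1/b) * y i) = lq_norm q n (\<lambda>i. (1/b) * y i) powr p" by (rule \<Phi>N)
      also have "lq_norm q n (\<lambda>i. (1/b) * y i) = 1" using b lq_hom[OF assms, of n "1/b" y] by (simp add: b_def)
      finally show ?thesis by simp
    qed
    have "\<Phi> (\<lambda>i. (1/(a+b)) * (x i + y i)) \<le> l * \<Phi> (\<lambda>i. (1/a) * x i) + (1-l) * \<Phi> (\<lambda>i. (1/b) * y i)"
      unfolding \<Phi>_def sum_distrib_left sum.distrib[symmetric]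
    proof (intro sum_mono)
      fix i
      have eq: "(1/(a+b)) * (x i + y i) = l * ((1/a) * x i) + (1-l) * ((1/b) * y i)"
      proof -
        have e1: "l * (1/a) = 1/(a+b)" using a b by (simp add: l_def)
        have e2: "(1-l) * (1/b) = 1/(a+b)" using a b l(3) by simp
        have "l * ((1/a) * x i) + (1-l) * ((1/b) * y i) = (l * (1/a)) * x i + ((1-l) * (1/b)) * y i"
          by (simp only: mult.assoc)
        also have "\<dots> = (1/(a+b)) * (x i + y i)" by (simp only: e1 e2 distrib_left)
        finally show ?thesis by simp
      qed
      have "\<bar>(1/(a+b)) * (x i + y i)\<bar> \<le> l * \<bar>(1/a) * x i\<bar> + (1-l) * \<bar>(1/b) * y i\<bar>"
        unfolding eq using l by (metis abs_mult abs_of_nonneg abs_triangle_ineq diff_ge_0_iff_ge)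
      then have "\<bar>(1/(a+b)) * (x i + y i)\<bar> powr p \<le> (l * \<bar>(1/a) * x i\<bar> + (1-l) * \<bar>(1/b) * y i\<bar>) powr p"
        using p by (intro powr_mono2) auto
      also have "\<dots> \<le> l * \<bar>(1/a) * x i\<bar> powr p + (1-l) * \<bar>(1/b) * y i\<bar> powr p"
        using p l by (intro powr_convex0) auto
      finally show "\<bar>(1/(a+b)) * (x i + y i)\<bar> powr p \<le> l * \<bar>(1/a) * x i\<bar> powr p + (1-l) * \<bar>(1/b) * y i\<bar> powr p" .
    qed
    then have "\<Phi> (\<lambda>i. (1/(a+b)) * (x i + y i)) \<le> 1" using \<Phi>x \<Phi>y by simp
    then have "lq_norm q n (\<lambda>i. (1/(a+b)) * (x i + y i)) \<le> 1"
      using p \<Phi>nn by (simp add: N powr_le1)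
    then have "(1/(a+b)) * lq_norm q n (\<lambda>i. x i + y i) \<le> 1"
      using a b lq_hom[OF assms, of n "1/(a+b)" "\<lambda>i. x i + y i"] by simp
    then show ?thesis using a b by (simp add: a_def b_def field_simps)
  qed
qed

lemma lborel_affine_pre:
  fixes c t :: real
  assumes "c > 0" "B \<in> sets borel"
  shows "emeasure lborel {y. (y - t) / c \<in> B} = ennreal c * emeasure lborel B"
proof -
  have m: "{y. (y - t) / c \<in> B} \<in> sets borel"
  proof -
    have "(\<lambda>y::real. (y - t) / c) \<in> borel_measurable borel" by measurable
    from measurable_sets[OF this assms(2)] show ?thesis by (simp add: vimage_def)
  qed
  have "emeasure lborel {y. (y - t) / c \<in> B} =
        emeasure (density (distr lborel borel (\<lambda>x. t + c * x)) (\<lambda>_. ennreal \<bar>c\<bar>)) {y. (y - t) / c \<in> B}"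
    using lborel_real_affine[of c t] assms by simp
  also have "\<dots> = ennreal c * emeasure (distr lborel borel (\<lambda>x. t + c * x)) {y. (y - t) / c \<in> B}"
    using m assms by (subst emeasure_density_const) auto
  also have "emeasure (distr lborel borel (\<lambda>x. t + c * x)) {y. (y - t) / c \<in> B} =
      emeasure lborel ((\<lambda>x. t + c * x) -` {y. (y - t) / c \<in> B} \<inter> space lborel)"
    using m by (intro emeasure_distr) auto
  also have "(\<lambda>x. t + c * x) -` {y. (y - t) / c \<in> B} \<inter> space lborel = B"
    using assms by auto
  finally show ?thesis .
qed

lemma affine_PiM:
  fixes c :: real and t :: "nat \<Rightarrow> real" and n :: nat
  defines "Mn \<equiv> PiM {..<n} (\<lambda>_. lborel :: real measure)"
  assumes c: "c > 0" and A: "A \<in> sets Mn"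
  shows "emeasure Mn ((\<lambda>x. \<lambda>i\<in>{..<n}. (x i - t i) / c) -` A \<inter> space Mn) = ennreal (c ^ n) * emeasure Mn A"
proof -
  interpret product_sigma_finite "\<lambda>_. lborel :: real measure" by standard
  define T where "T = (\<lambda>x::nat\<Rightarrow>real. \<lambda>i\<in>{..<n}. (x i - t i) / c)"
  have Tm: "T \<in> Mn \<rightarrow>\<^sub>M Mn" unfolding T_def Mn_def by measurable
  define P where "P = density (distr Mn Mn T) (\<lambda>_. ennreal (1 / c ^ n))"
  have "P = Mn"
    unfolding Mn_def
  proof (rule PiM_eqI)
    show "finite {..<n}" by simp
    show "sets P = sets (Pi\<^sub>M {..<n} (\<lambda>_. lborel))" by (simp add: P_def Mn_def)
    fix B :: "nat \<Rightarrow> real set" assume B: "\<And>i. i \<in> {..<n} \<Longrightarrow> B i \<in> sets lborel"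
    have Bs: "Pi\<^sub>E {..<n} B \<in> sets Mn" unfolding Mn_def using B by (intro sets_PiM_I_finite) auto
    have pre: "T -` Pi\<^sub>E {..<n} B \<inter> space Mn = Pi\<^sub>E {..<n} (\<lambda>i. {y. (y - t i) / c \<in> B i})"
      by (auto simp: T_def Mn_def space_PiM PiE_def Pi_def extensional_def)
    have Bi: "{y. (y - t i) / c \<in> B i} \<in> sets lborel" if "i \<in> {..<n}" for i
    proof -
      have "(\<lambda>y::real. (y - t i) / c) \<in> borel_measurable borel" by measurable
      from measurable_sets[OF this, of "B i"] B[OF that] show ?thesis by (simp add: vimage_def)
    qed
    have "emeasure P (Pi\<^sub>E {..<n} B) = ennreal (1 / c ^ n) * emeasure (distr Mn Mn T) (Pi\<^sub>E {..<n} B)"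
      unfolding P_def using Bs by (subst emeasure_density_const) auto
    also have "emeasure (distr Mn Mn T) (Pi\<^sub>E {..<n} B) = emeasure Mn (Pi\<^sub>E {..<n} (\<lambda>i. {y. (y - t i) / c \<in> B i}))"
      using Tm Bs by (subst emeasure_distr) (auto simp: pre)
    also have "\<dots> = (\<Prod>i\<in>{..<n}. emeasure lborel {y. (y - t i) / c \<in> B i})"
      unfolding Mn_def using Bi by (intro emeasure_PiM) auto
    also have "\<dots> = (\<Prod>i\<in>{..<n}. ennreal c * emeasure lborel (B i))"
      using B c by (intro prod.cong refl lborel_affine_pre) auto
    also have "\<dots> = ennreal (c ^ n) * (\<Prod>i\<in>{..<n}. emeasure lborel (B i))"
      using c by (simp add: prod.distrib ennreal_power)
    also have "ennreal (1 / c ^ n) * (ennreal (c ^ n) * (\<Prod>i\<in>{..<n}. emeasure lborel (B i))) =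
               (ennreal (1 / c ^ n) * ennreal (c ^ n)) * (\<Prod>i\<in>{..<n}. emeasure lborel (B i))"
      by (simp add: mult.assoc)
    also have "ennreal (1 / c ^ n) * ennreal (c ^ n) = 1"
      using c by (simp add: ennreal_mult[symmetric])
    finally show "emeasure P (Pi\<^sub>E {..<n} B) = (\<Prod>i\<in>{..<n}. emeasure lborel (B i))" by simp
  qed
  then have "emeasure Mn A = ennreal (1 / c ^ n) * emeasure (distr Mn Mn T) A"
    using A by (metis P_def emeasure_density_const sets_distr)
  also have "emeasure (distr Mn Mn T) A = emeasure Mn (T -` A \<inter> space Mn)"
    using Tm A by (intro emeasure_distr) auto
  finally have "ennreal (c ^ n) * emeasure Mn A = ennreal (c ^ n) * ennreal (1 / c ^ n) * emeasure Mn (T -` A \<inter> space Mn)"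
    by (simp add: mult.assoc)
  also have "ennreal (c ^ n) * ennreal (1 / c ^ n) = 1" using c by (simp add: ennreal_mult[symmetric])
  finally have "ennreal (c ^ n) * emeasure Mn A = emeasure Mn (T -` A \<inter> space Mn)" by simp
  then show ?thesis unfolding T_def by metis
qed

lemma volumetric:
  fixes N :: "(nat \<Rightarrow> real) \<Rightarrow> real" and n :: nat and S :: "(nat \<Rightarrow> real) set" and \<epsilon> Cb r0 :: real
  defines "Mn \<equiv> PiM {..<n} (\<lambda>_. lborel :: real measure)"
  assumes local: "\<And>x y. (\<And>i. i < n \<Longrightarrow> x i = y i) \<Longrightarrow> N x = N y"
    and hom: "\<And>c x. N (\<lambda>i. c * x i) = \<bar>c\<bar> * N x"
    and tri: "\<And>x y. N (\<lambda>i. x i + y i) \<le> N x + N y"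
    and coord: "\<And>x i. i < n \<Longrightarrow> \<bar>x i\<bar> \<le> Cb * N x" and Cb: "Cb \<ge> 0"
    and small: "\<And>x. (\<And>i. i < n \<Longrightarrow> \<bar>x i\<bar> \<le> r0) \<Longrightarrow> N x \<le> 1" and r0: "r0 > 0"
    and meas: "N \<in> borel_measurable Mn"
    and eps: "\<epsilon> > 0" and fin: "finite S" and inB: "\<forall>s\<in>S. N s \<le> 1"
    and sep: "\<forall>s\<in>S. \<forall>t\<in>S. s \<noteq> t \<longrightarrow> N (\<lambda>i. s i - t i) > \<epsilon>"
  shows "real (card S) \<le> (1 + 2 / \<epsilon>) ^ n"
proof -
  interpret product_sigma_finite "\<lambda>_. lborel :: real measure" by standard
  define B1 where "B1 = {x \<in> space Mn. N x \<le> 1}"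
  have B1s: "B1 \<in> sets Mn"
    using measurable_sets[OF meas, of "{..1}"] by (simp add: B1_def vimage_def Int_def conj_commute)
  define Ball where "Ball s r = {x \<in> space Mn. N (\<lambda>i. x i - s i) \<le> r}" for s :: "nat \<Rightarrow> real" and r :: real
  have N0: "N (\<lambda>i. 0) = 0" using hom[of 0 "\<lambda>i. 0"] by simp
  have Ball_meas: "emeasure Mn (Ball s r) = ennreal (r ^ n) * emeasure Mn B1" if r: "r > 0" for s r
  proof -
    have "Ball s r = (\<lambda>x. \<lambda>i\<in>{..<n}. (x i - s i) / r) -` B1 \<inter> space Mn"
    proof (intro set_eqI iffI)
      fix x assume x: "x \<in> Ball s r"
      have "N (\<lambda>i\<in>{..<n}. (x i - s i) / r) = N (\<lambda>i. (1/r) * (x i - s i))" by (intro local) auto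
      also have "\<dots> = (1/r) * N (\<lambda>i. x i - s i)" using r hom[of "1/r" "\<lambda>i. x i - s i"] by simp
      also have "\<dots> \<le> 1" using x r by (simp add: Ball_def field_simps)
      finally show "x \<in> (\<lambda>x. \<lambda>i\<in>{..<n}. (x i - s i) / r) -` B1 \<inter> space Mn"
        using x by (auto simp: B1_def Ball_def Mn_def space_PiM)
    next
      fix x assume x: "x \<in> (\<lambda>x. \<lambda>i\<in>{..<n}. (x i - s i) / r) -` B1 \<inter> space Mn"
      have "(1/r) * N (\<lambda>i. x i - s i) = N (\<lambda>i. (1/r) * (x i - s i))" using r hom[of "1/r" "\<lambda>i. x i - s i"] by simp
      also have "\<dots> = N (\<lambda>i\<in>{..<n}. (x i - s i) / r)" by (intro local) auto
      also have "\<dots> \<le> 1" using x by (simp add: B1_def)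
      finally show "x \<in> Ball s r" using x r by (simp add: Ball_def field_simps)
    qed
    then show ?thesis using affine_PiM[of r B1 n s] r B1s by (simp add: Mn_def)
  qed
  define m where "m = emeasure Mn B1"
  have box: "Pi\<^sub>E {..<n} (\<lambda>_. {-a..a}) \<in> sets Mn" for a :: real
    unfolding Mn_def by (intro sets_PiM_I_finite) auto
  have box_meas: "emeasure Mn (Pi\<^sub>E {..<n} (\<lambda>_. {-a..a})) = ennreal ((2*a) ^ n)" if "a \<ge> 0" for a :: real
  proof -
    have "emeasure Mn (Pi\<^sub>E {..<n} (\<lambda>_. {-a..a})) = (\<Prod>i\<in>{..<n}. emeasure lborel {-a..a})"
      unfolding Mn_def by (intro emeasure_PiM) auto
    also have "\<dots> = (\<Prod>i\<in>{..<n}. ennreal (2*a))" using that by simp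
    finally show ?thesis using that by (simp add: ennreal_power)
  qed
  have m_pos: "m > 0"
  proof -
    have "Pi\<^sub>E {..<n} (\<lambda>_. {-r0..r0}) \<subseteq> B1"
      by (auto simp: B1_def Mn_def space_PiM PiE_def Pi_def intro!: small)
    then have le: "emeasure Mn (Pi\<^sub>E {..<n} (\<lambda>_. {-r0..r0})) \<le> m"
      unfolding m_def using B1s by (intro emeasure_mono) auto
    have "0 < emeasure Mn (Pi\<^sub>E {..<n} (\<lambda>_. {-r0..r0}))" using box_meas[of r0] r0 by simp
    then show ?thesis using le by (rule less_le_trans)
  qed
  have m_fin: "m < \<infinity>"
  proof -
    have "B1 \<subseteq> Pi\<^sub>E {..<n} (\<lambda>_. {-Cb..Cb})"
    proof
      fix x assume x: "x \<in> B1"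
      have "\<bar>x i\<bar> \<le> Cb" if "i < n" for i
        using coord[OF that, of x] x Cb by (simp add: B1_def) (meson mult_left_le order_trans)
      then show "x \<in> Pi\<^sub>E {..<n} (\<lambda>_. {-Cb..Cb})" using x
        by (auto simp: B1_def Mn_def space_PiM PiE_def Pi_def abs_le_iff) (metis neg_le_iff_le minus_minus)
    qed
    then have "m \<le> emeasure Mn (Pi\<^sub>E {..<n} (\<lambda>_. {-Cb..Cb}))"
      unfolding m_def using box by (intro emeasure_mono) auto
    then show ?thesis using box_meas[of Cb] Cb by (simp add: top.not_eq_extremum order_le_less_trans)
  qed
  define r where "r = \<epsilon> / 2"
  have r: "r > 0" using eps by (simp add: r_def)
  define F where "F s = Ball s r" for s
  have Ball_sets: "Ball s R \<in> sets Mn" for s R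
  proof -
    have "(\<lambda>x. N (\<lambda>i. x i - s i)) \<in> borel_measurable Mn"
    proof -
      have "(\<lambda>x. \<lambda>i\<in>{..<n}. x i - s i) \<in> Mn \<rightarrow>\<^sub>M Mn" unfolding Mn_def by measurable
      from measurable_comp[OF this meas] have "(\<lambda>x. N (\<lambda>i\<in>{..<n}. x i - s i)) \<in> borel_measurable Mn"
        by (simp add: o_def)
      moreover have "N (\<lambda>i\<in>{..<n}. x i - s i) = N (\<lambda>i. x i - s i)" for x by (intro local) auto
      ultimately show ?thesis by simp
    qed
    from measurable_sets[OF this, of "{..R}"] show ?thesis
      by (simp add: Ball_def vimage_def Int_def conj_commute)
  qed
  have Fsets: "F ` S \<subseteq> sets Mn" using Ball_sets by (auto simp: F_def)
  have disj: "disjoint_family_on F S"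
    unfolding disjoint_family_on_def
  proof (intro ballI impI)
    fix s t assume st: "s \<in> S" "t \<in> S" "s \<noteq> t"
    show "F s \<inter> F t = {}"
    proof (rule ccontr)
      assume "F s \<inter> F t \<noteq> {}"
      then obtain x where x: "x \<in> F s" "x \<in> F t" by auto
      have "N (\<lambda>i. s i - t i) \<le> N (\<lambda>i. s i - x i) + N (\<lambda>i. x i - t i)"
        using tri[of "\<lambda>i. s i - x i" "\<lambda>i. x i - t i"] by simp
      also have "N (\<lambda>i. s i - x i) = N (\<lambda>i. x i - s i)"
        using hom[of "-1" "\<lambda>i. x i - s i"] by simp
      finally have "N (\<lambda>i. s i - t i) \<le> 2 * r" using x by (simp add: F_def Ball_def)
      then show False using sep st by (simp add: r_def) (meson not_less)
    qed
  qed
  have sub: "(\<Union>s\<in>S. F s) \<subseteq> Ball (\<lambda>_. 0) (1 + r)"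
  proof
    fix x assume "x \<in> (\<Union>s\<in>S. F s)"
    then obtain s where s: "s \<in> S" "x \<in> F s" by auto
    have "N x \<le> N (\<lambda>i. x i - s i) + N s" using tri[of "\<lambda>i. x i - s i" s] by simp
    then show "x \<in> Ball (\<lambda>_. 0) (1 + r)"
      using s inB by (auto simp: F_def Ball_def)
  qed
  have "(\<Sum>s\<in>S. emeasure Mn (F s)) = emeasure Mn (\<Union>s\<in>S. F s)"
    using sum_emeasure[OF Fsets disj fin] .
  also have "\<dots> \<le> emeasure Mn (Ball (\<lambda>_. 0) (1 + r))"
    by (intro emeasure_mono sub Ball_sets)
  finally have "(\<Sum>s\<in>S. emeasure Mn (F s)) \<le> emeasure Mn (Ball (\<lambda>_. 0) (1 + r))" .
  moreover have "(\<Sum>s\<in>S. emeasure Mn (F s)) = of_nat (card S) * (ennreal (r ^ n) * m)"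
    using r by (simp add: F_def Ball_meas m_def)
  moreover have "emeasure Mn (Ball (\<lambda>_. 0) (1 + r)) = ennreal ((1 + r) ^ n) * m"
    using r by (simp add: Ball_meas m_def)
  ultimately have le: "of_nat (card S) * (ennreal (r ^ n) * m) \<le> ennreal ((1 + r) ^ n) * m" by simp
  obtain mr where mr: "m = ennreal mr" "mr > 0"
    using m_pos m_fin by (metis ennreal_cases ennreal_less_zero_iff infinity_ennreal_def less_irrefl)
  have "ennreal (real (card S) * r ^ n * mr) \<le> ennreal ((1 + r) ^ n * mr)"
    using le mr r by (simp add: ennreal_mult[symmetric] ennreal_of_nat_eq_real_of_nat mult.assoc)
  then have "real (card S) * r ^ n * mr \<le> (1 + r) ^ n * mr"
    using mr r by (subst (asm) ennreal_le_iff) auto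
  then have "real (card S) * r ^ n \<le> (1 + r) ^ n" using mr by simp
  then have "real (card S) \<le> (1 + r) ^ n / r ^ n" using r by (simp add: field_simps)
  also have "(1 + r) ^ n / r ^ n = ((1 + r) / r) ^ n" by (simp add: power_divide)
  also have "(1 + r) / r = 1 + 2 / \<epsilon>" using eps by (simp add: r_def field_simps)
  finally show ?thesis .
qed

lemma norm2_L2: "norm2 n v = L2_set v {..<n}"
  by (simp add: norm2_def L2_set_def)

lemma norm2_hom: "norm2 n (\<lambda>i. c * x i) = \<bar>c\<bar> * norm2 n x"
proof -
  have "norm2 n (\<lambda>i. c * x i) = norm2 n (\<lambda>i. \<bar>c\<bar> * \<bar>x i\<bar>)"
    by (simp add: norm2_def abs_mult power_mult_distrib)
  also have "\<dots> = \<bar>c\<bar> * norm2 n (\<lambda>i. \<bar>x i\<bar>)" by (simp add: norm2_L2 L2_set_right_distrib)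
  also have "norm2 n (\<lambda>i. \<bar>x i\<bar>) = norm2 n x" by (simp add: norm2_def)
  finally show ?thesis .
qed

lemma norm2_tri: "norm2 n (\<lambda>i. x i + y i) \<le> norm2 n x + norm2 n y"
  by (simp add: norm2_L2 L2_set_triangle_ineq)

lemma norm2_local: "(\<And>i. i < n \<Longrightarrow> x i = y i) \<Longrightarrow> norm2 n x = norm2 n y"
  by (simp add: norm2_def)

lemma norm2_nonneg: "0 \<le> norm2 n x" by (simp add: norm2_def sum_nonneg)

lemma norm2_coord: "i < n \<Longrightarrow> \<bar>x i\<bar> \<le> norm2 n x"
proof -
  assume i: "i < n"
  have "\<bar>x i\<bar> \<le> L2_set (\<lambda>i. \<bar>x i\<bar>) {..<n}" using i by (intro member_le_L2_set) auto
  also have "\<dots> = norm2 n x" by (simp add: norm2_L2[symmetric] norm2_def)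
  finally show ?thesis .
qed

lemma norm2_small: assumes "\<And>i. i < n \<Longrightarrow> \<bar>x i\<bar> \<le> 1 / real n" shows "norm2 n x \<le> 1"
proof -
  have "(\<Sum>i<n. (x i)\<^sup>2) \<le> (\<Sum>i<n. 1 / real n)"
  proof (intro sum_mono)
    fix i assume i: "i \<in> {..<n}"
    then have n: "n > 0" by auto
    have "1 / real n \<le> 1" using n by simp
    moreover have "\<bar>x i\<bar> \<le> 1 / real n" using assms i by auto
    ultimately have "\<bar>x i\<bar> \<le> 1" by linarith
    have "(x i)\<^sup>2 = \<bar>x i\<bar> * \<bar>x i\<bar>" by (simp add: power2_eq_square)
    also have "\<dots> \<le> \<bar>x i\<bar> * 1" using \<open>\<bar>x i\<bar> \<le> 1\<close> by (intro mult_left_mono) auto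
    finally have "(x i)\<^sup>2 \<le> \<bar>x i\<bar>" by simp
    then show "(x i)\<^sup>2 \<le> 1 / real n" using \<open>\<bar>x i\<bar> \<le> 1 / real n\<close> by linarith
  qed
  also have "\<dots> \<le> 1" by simp
  finally show ?thesis by (simp add: norm2_def)
qed

lemma norm2_meas: "norm2 n \<in> borel_measurable (PiM {..<n} (\<lambda>_. lborel :: real measure))"
  unfolding norm2_def by measurable

lemma lq_meas: "lq_norm q n \<in> borel_measurable (PiM {..<n} (\<lambda>_. lborel :: real measure))"
  unfolding lq_norm_def by measurable

lemma covering:
  fixes N :: "(nat \<Rightarrow> real) \<Rightarrow> real" and n :: nat and A :: "(nat \<Rightarrow> real) set" and \<epsilon> Cb rr :: real
  assumes local: "\<And>x y. (\<And>i. i < n \<Longrightarrow> x i = y i) \<Longrightarrow> N x = N y"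
    and hom: "\<And>c x. N (\<lambda>i. c * x i) = \<bar>c\<bar> * N x"
    and tri: "\<And>x y. N (\<lambda>i. x i + y i) \<le> N x + N y"
    and coord: "\<And>x i. i < n \<Longrightarrow> \<bar>x i\<bar> \<le> Cb * N x" and Cb: "Cb \<ge> 0"
    and small: "\<And>x. (\<And>i. i < n \<Longrightarrow> \<bar>x i\<bar> \<le> rr) \<Longrightarrow> N x \<le> 1" and rr: "rr > 0"
    and meas: "N \<in> borel_measurable (PiM {..<n} (\<lambda>_. lborel :: real measure))"
    and eps: "\<epsilon> > 0" and inB: "\<forall>s\<in>A. N s \<le> 1"
  shows "\<exists>C. finite C \<and> C \<subseteq> A \<and> real (card C) \<le> (1 + 2 / \<epsilon>) ^ n \<and>
             (\<forall>v\<in>A. \<exists>c\<in>C. N (\<lambda>i. v i - c i) \<le> \<epsilon>)"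
proof -
  define P where "P T \<longleftrightarrow> finite T \<and> T \<subseteq> A \<and> (\<forall>s\<in>T. \<forall>t\<in>T. s \<noteq> t \<longrightarrow> N (\<lambda>i. s i - t i) > \<epsilon>)" for T
  have bnd: "real (card T) \<le> (1 + 2 / \<epsilon>) ^ n" if "P T" for T
    using that inB unfolding P_def
    by (intro volumetric[OF local hom tri coord Cb small rr meas eps]) auto
  define B where "B = nat \<lceil>(1 + 2 / \<epsilon>) ^ n\<rceil>"
  have cardB: "card T \<le> B" if "P T" for T
    using bnd[OF that] unfolding B_def by linarith
  define KK where "KK = {card T | T. P T}"
  have KKfin: "finite KK" using cardB by (intro finite_subset[of KK "{..B}"]) (auto simp: KK_def)
  have "P {}" by (simp add: P_def)
  then have KKne: "KK \<noteq> {}" by (auto simp: KK_def)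
  have "Max KK \<in> KK" using KKfin KKne by (rule Max_in)
  then obtain T where T: "P T" "card T = Max KK" by (auto simp: KK_def)
  have N0: "N (\<lambda>i. 0) = 0" using hom[of 0 "\<lambda>i. 0"] by simp
  have Nsym: "N (\<lambda>i. t i - v i) = N (\<lambda>i. v i - t i)" for t v
    using hom[of "-1" "\<lambda>i. v i - t i"] by simp
  have cov: "\<exists>c\<in>T. N (\<lambda>i. v i - c i) \<le> \<epsilon>" if v: "v \<in> A" for v
  proof (rule ccontr)
    assume "\<not> ?thesis"
    then have far: "\<forall>c\<in>T. N (\<lambda>i. v i - c i) > \<epsilon>" by auto
    have "v \<notin> T" using far eps N0 by force
    have far2: "\<forall>c\<in>T. N (\<lambda>i. c i - v i) > \<epsilon>" using far Nsym by (metis (no_types, lifting))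
    have "P (insert v T)" using T(1) far far2 v unfolding P_def by auto
    then have "card (insert v T) \<in> KK" by (auto simp: KK_def)
    then have "card (insert v T) \<le> Max KK" using KKfin by simp
    moreover have "card (insert v T) = card T + 1" using \<open>v \<notin> T\<close> T(1) by (simp add: P_def)
    ultimately show False using T(2) by simp
  qed
  have "finite T" "T \<subseteq> A" using T(1) unfolding P_def by auto
  then show ?thesis using bnd[OF T(1)] cov by (intro exI[of _ T]) auto
qed

lemma sqrt_add_sq_le: "0 \<le> a \<Longrightarrow> 0 \<le> b \<Longrightarrow> sqrt (a + b\<^sup>2) \<le> sqrt a + b"
  by (smt (verit, best) power2_sum real_sqrt_le_iff real_sqrt_pow2 real_sqrt_ge_zero real_sqrt_unique
      mult_nonneg_nonneg zero_le_power2)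

lemma gronwall_vec:
  fixes E Dd :: "nat \<Rightarrow> real \<Rightarrow> real" and a0 T c D x :: real and m :: nat
  assumes T: "0 \<le> T" and c: "c > 0" and D: "D \<ge> 0"
    and deriv: "\<And>x j. x \<in> {a0..a0+T} \<Longrightarrow> j < m \<Longrightarrow> (E j has_real_derivative Dd j x) (at x within {a0..a0+T})"
    and bound: "\<And>x. x \<in> {a0..a0+T} \<Longrightarrow> sqrt (\<Sum>j<m. (Dd j x)\<^sup>2) \<le> c * sqrt (\<Sum>j<m. (E j x)\<^sup>2) + D"
    and x: "x \<in> {a0..a0+T}"
  shows "sqrt (\<Sum>j<m. (E j x)\<^sup>2) \<le> (sqrt (\<Sum>j<m. (E j a0)\<^sup>2) + D / c) * exp (c * (x - a0)) - D / c"
proof -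
  define I where "I = {a0..a0+T}"
  define w where "w y = (\<Sum>j<m. (E j y)\<^sup>2)" for y
  define w' where "w' y = (\<Sum>j<m. 2 * E j y * Dd j y)" for y
  have w0: "0 \<le> w y" for y by (simp add: w_def sum_nonneg)
  have dw: "(w has_real_derivative w' y) (at y within I)" if y: "y \<in> I" for y
    unfolding w_def w'_def
    by (rule DERIV_sum) (auto intro!: derivative_eq_intros deriv y[unfolded I_def] simp: I_def)
  have w'b: "w' y \<le> 2 * sqrt (w y) * (c * sqrt (w y) + D)" if y: "y \<in> I" for y
  proof -
    have a: "w' y \<le> 2 * (\<Sum>j<m. \<bar>E j y\<bar> * \<bar>Dd j y\<bar>)"
      unfolding w'_def sum_distrib_left
      by (intro sum_mono) (auto simp: abs_mult[symmetric] mult.assoc)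
    have b: "(\<Sum>j<m. \<bar>E j y\<bar> * \<bar>Dd j y\<bar>) \<le> L2_set (\<lambda>j. E j y) {..<m} * L2_set (\<lambda>j. Dd j y) {..<m}"
      by (rule L2_set_mult_ineq)
    have b2: "L2_set (\<lambda>j. E j y) {..<m} = sqrt (w y)" by (simp add: L2_set_def w_def)
    have cc: "L2_set (\<lambda>j. Dd j y) {..<m} \<le> c * sqrt (w y) + D"
      using bound[of y] y by (simp add: L2_set_def w_def I_def)
    have "sqrt (w y) * L2_set (\<lambda>j. Dd j y) {..<m} \<le> sqrt (w y) * (c * sqrt (w y) + D)"
      using cc w0[of y] by (intro mult_left_mono) auto
    then show ?thesis using a b unfolding b2 by (simp only: mult.assoc)
  qed
  have key: "sqrt (w x) \<le> (sqrt (w a0) + D / c) * exp (c * (x - a0)) - D / c + \<eta> * exp (c * (x - a0))"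
    if eta: "\<eta> > 0" for \<eta>
  proof -
    define v where "v y = sqrt (w y + \<eta>\<^sup>2)" for y
    have vpos: "v y > 0" for y using w0[of y] eta by (simp add: v_def add_nonneg_pos)
    have dv: "(v has_real_derivative w' y / (2 * v y)) (at y within I)" if y: "y \<in> I" for y
    proof -
      have "((\<lambda>y. sqrt (w y + \<eta>\<^sup>2)) has_real_derivative (inverse (sqrt (w y + \<eta>\<^sup>2)) / 2) * (w' y + 0)) (at y within I)"
        by (intro DERIV_chain2[where f = sqrt] DERIV_real_sqrt derivative_intros dw y)
           (use w0[of y] eta in \<open>simp add: add_nonneg_pos\<close>)
      then show ?thesis unfolding v_def[abs_def] by (simp add: field_simps)
    qed
    have v'b: "w' y / (2 * v y) \<le> c * v y + D" if y: "y \<in> I" for y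
    proof -
      have sv: "sqrt (w y) \<le> v y" by (simp add: v_def)
      have "w' y \<le> 2 * sqrt (w y) * (c * sqrt (w y) + D)" by (rule w'b[OF y])
      also have "\<dots> \<le> 2 * v y * (c * v y + D)"
        using sv c D w0[of y] vpos[of y] by (intro mult_mono) (auto intro!: mult_left_mono add_nonneg_nonneg)
      finally show ?thesis using vpos[of y] by (simp add: field_simps)
    qed
    define g where "g y = (v y + D / c) * exp (- c * (y - a0))" for y
    define g' where "g' y = (w' y / (2 * v y)) * exp (- c * (y - a0)) + (v y + D / c) * (exp (- c * (y - a0)) * (- c))" for y
    have dg: "(g has_real_derivative g' y) (at y within I)" if y: "y \<in> I" for y
      unfolding g_def g'_def
      by (rule derivative_eq_intros dv[OF y] | simp)+
    have g'n: "g' y \<le> 0" if y: "y \<in> I" for y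
    proof -
      have "g' y = exp (- c * (y - a0)) * (w' y / (2 * v y) - c * v y - D)"
        using c by (simp add: g'_def field_simps)
      also have "\<dots> \<le> 0" using v'b[OF y] by (intro mult_nonneg_nonpos) auto
      finally show ?thesis .
    qed
    have xa: "a0 \<le> x" using x by simp
    have "\<exists>z\<in>{a0..x}. g x - g a0 = (*) (g' z) (x - a0)"
    proof (rule mvt_very_simple[OF xa])
      fix z assume "a0 \<le> z" "z \<le> x"
      then have z: "z \<in> I" using x by (simp add: I_def)
      have "(g has_real_derivative g' z) (at z within {a0..x})"
        by (rule DERIV_subset[OF dg[OF z]]) (use x in \<open>auto simp: I_def\<close>)
      then show "(g has_derivative (*) (g' z)) (at z within {a0..x})"
        by (simp add: has_field_derivative_def)
    qed
    then obtain z where z: "z \<in> {a0..x}" "g x - g a0 = (x - a0) * g' z" by auto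
    have "z \<in> I" using z x by (auto simp: I_def)
    then have "(x - a0) * g' z \<le> 0" using g'n[of z] xa by (intro mult_nonneg_nonpos) auto
    then have "g x \<le> g a0" using z by linarith
    then have "(v x + D / c) * exp (- c * (x - a0)) \<le> v a0 + D / c" by (simp add: g_def)
    then have "(v x + D / c) * exp (- c * (x - a0)) * exp (c * (x - a0)) \<le> (v a0 + D / c) * exp (c * (x - a0))"
      by (intro mult_right_mono) auto
    moreover have "exp (- c * (x - a0)) * exp (c * (x - a0)) = 1" by (simp add: exp_add[symmetric])
    ultimately have "v x + D / c \<le> (v a0 + D / c) * exp (c * (x - a0))"
      by (metis mult.assoc mult_1_right)
    moreover have "v a0 \<le> sqrt (w a0) + \<eta>" unfolding v_def using w0 eta by (intro sqrt_add_sq_le) auto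
    moreover have "sqrt (w x) \<le> v x" by (simp add: v_def)
    ultimately have h1: "sqrt (w x) \<le> (v a0 + D / c) * exp (c * (x - a0)) - D / c"
      and h2: "v a0 \<le> sqrt (w a0) + \<eta>" by linarith+
    have "(v a0 + D / c) * exp (c * (x - a0)) \<le> (sqrt (w a0) + \<eta> + D / c) * exp (c * (x - a0))"
      using h2 by (intro mult_right_mono) auto
    also have "\<dots> = (sqrt (w a0) + D / c) * exp (c * (x - a0)) + \<eta> * exp (c * (x - a0))"
      by (simp add: algebra_simps)
    finally show ?thesis using h1 by linarith
  qed
  have "sqrt (w x) \<le> (sqrt (w a0) + D / c) * exp (c * (x - a0)) - D / c"
  proof (rule field_le_epsilon)
    fix e :: real assume e: "e > 0"
    have ep: "exp (c * (x - a0)) > 0" by simp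
    from key[of "e / exp (c * (x - a0))"] e ep show "sqrt (w x) \<le> (sqrt (w a0) + D / c) * exp (c * (x - a0)) - D / c + e"
      by simp
  qed
  then show ?thesis by (simp add: w_def)
qed

lemma sqrt_lip_bound:
  fixes w L D R \<Delta> :: real
  assumes "0 \<le> w" "0 \<le> L" "0 \<le> D" "R \<le> w" "0 \<le> R" "\<bar>\<Delta>\<bar> \<le> L * sqrt w + D"
  shows "sqrt (R + \<Delta>\<^sup>2) \<le> sqrt (L\<^sup>2 + 1) * sqrt w + D"
proof -
  define s where "s = sqrt w"
  define c where "c = sqrt (L\<^sup>2 + 1)"
  have s: "0 \<le> s" "s\<^sup>2 = w" using assms by (auto simp: s_def)
  have c: "L \<le> c" "c\<^sup>2 = L\<^sup>2 + 1" "0 \<le> c" using assms by (auto simp: c_def real_le_rsqrt)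
  have "\<Delta>\<^sup>2 \<le> (L * s + D)\<^sup>2" using assms s
    by (metis abs_le_square_iff abs_of_nonneg add_nonneg_nonneg mult_nonneg_nonneg s_def)
  moreover have "(L * s + D)\<^sup>2 + w \<le> (c * s + D)\<^sup>2"
  proof -
    have "(c * s + D)\<^sup>2 - (L * s + D)\<^sup>2 - w = (c\<^sup>2 - L\<^sup>2) * s\<^sup>2 - w + 2 * s * D * (c - L)"
      by (simp add: power2_eq_square algebra_simps)
    also have "\<dots> = 2 * s * D * (c - L)" using c s by simp
    also have "\<dots> \<ge> 0" using s c assms by simp
    finally show ?thesis by simp
  qed
  ultimately have "R + \<Delta>\<^sup>2 \<le> (c * s + D)\<^sup>2" using assms by linarith
  then show ?thesis using s c assms by (auto simp: s_def[symmetric] c_def[symmetric] intro!: real_le_lsqrt)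
qed

lemma stability:
  fixes f :: "real \<Rightarrow> (nat \<Rightarrow> real) \<Rightarrow> (nat \<Rightarrow> real) \<Rightarrow> real" and G
  assumes m: "m \<ge> 1" and L: "L \<ge> 0" and LK: "LK \<ge> 0" and al: "\<alpha> \<ge> 0"
    and lipY: "\<forall>x Y Y'. (x, Y) \<in> G \<longrightarrow> (x, Y') \<in> G \<longrightarrow>
                 \<bar>f x Y \<theta> - f x Y' \<theta>\<bar> \<le> L * norm2 m (\<lambda>i. Y i - Y' i)"
    and lipT: "\<forall>(x, Y)\<in>G. \<bar>f x Y \<theta> - f x Y \<theta>'\<bar> \<le> LK * lq_norm q K (\<lambda>i. \<theta> i - \<theta>' i)"
    and s1: "is_solution m f G \<theta> Y0 a0 \<alpha> y" and s2: "is_solution m f G \<theta>' Y0' a0 \<alpha> y'"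
    and x: "x \<in> {a0..a0+\<alpha>}"
  shows "\<bar>y x - y' x\<bar> \<le> (norm2 m (\<lambda>i. Y0 i - Y0' i) + LK * lq_norm q K (\<lambda>i. \<theta> i - \<theta>' i) / sqrt (L\<^sup>2 + 1))
            * exp (sqrt (L\<^sup>2 + 1) * (x - a0)) - LK * lq_norm q K (\<lambda>i. \<theta> i - \<theta>' i) / sqrt (L\<^sup>2 + 1)"
proof -
  define I where "I = {a0..a0+\<alpha>}"
  obtain Ys where Ys: "\<forall>x\<in>I. Ys 0 x = y x"
      "\<forall>x\<in>I. \<forall>j. Suc j < m \<longrightarrow> (Ys j has_real_derivative Ys (Suc j) x) (at x within I)"
      "\<forall>x\<in>I. (Ys (m - 1) has_real_derivative f x (\<lambda>j. if j < m then Ys j x else 0) \<theta>) (at x within I)"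
      "(\<lambda>j. if j < m then Ys j a0 else 0) = Y0"
      "\<forall>x\<in>I. (x, (\<lambda>j. if j < m then Ys j x else 0)) \<in> G"
    using s1 unfolding is_solution_def Let_def I_def by blast
  obtain Zs where Zs: "\<forall>x\<in>I. Zs 0 x = y' x"
      "\<forall>x\<in>I. \<forall>j. Suc j < m \<longrightarrow> (Zs j has_real_derivative Zs (Suc j) x) (at x within I)"
      "\<forall>x\<in>I. (Zs (m - 1) has_real_derivative f x (\<lambda>j. if j < m then Zs j x else 0) \<theta>') (at x within I)"
      "(\<lambda>j. if j < m then Zs j a0 else 0) = Y0'"
      "\<forall>x\<in>I. (x, (\<lambda>j. if j < m then Zs j x else 0)) \<in> G"
    using s2 unfolding is_solution_def Let_def I_def by blast
  define St where "St x = (\<lambda>j. if j < m then Ys j x else 0)" for x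
  define St' where "St' x = (\<lambda>j. if j < m then Zs j x else 0)" for x
  define D where "D = LK * lq_norm q K (\<lambda>i. \<theta> i - \<theta>' i)"
  define c where "c = sqrt (L\<^sup>2 + 1)"
  have D: "D \<ge> 0" using LK lq_nonneg by (simp add: D_def)
  have c: "c > 0" by (simp add: c_def add_nonneg_pos)
  define E where "E j x = Ys j x - Zs j x" for j x
  define \<Delta> where "\<Delta> x = f x (St x) \<theta> - f x (St' x) \<theta>'" for x
  define Dd where "Dd j x = (if Suc j < m then E (Suc j) x else \<Delta> x)" for j x
  have deriv: "(E j has_real_derivative Dd j x) (at x within I)" if x: "x \<in> I" and j: "j < m" for x j
  proof (cases "Suc j < m")
    case True
    then show ?thesis using Ys(2) Zs(2) x unfolding E_def[abs_def] Dd_def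
      by (auto intro!: derivative_eq_intros)
  next
    case False
    then have jm: "j = m - 1" using j by simp
    then show ?thesis using Ys(3) Zs(3) x False unfolding E_def[abs_def] Dd_def \<Delta>_def St_def St'_def
      by (auto intro!: derivative_eq_intros)
  qed
  have wE: "sqrt (\<Sum>j<m. (E j x)\<^sup>2) = norm2 m (\<lambda>i. St x i - St' x i)" for x
    by (simp add: norm2_def St_def St'_def E_def)
  have bound: "sqrt (\<Sum>j<m. (Dd j x)\<^sup>2) \<le> c * sqrt (\<Sum>j<m. (E j x)\<^sup>2) + D" if x: "x \<in> I" for x
  proof -
    obtain k where k: "m = Suc k" using m by (cases m) auto
    have sD: "(\<Sum>j<m. (Dd j x)\<^sup>2) = (\<Sum>j<k. (E (Suc j) x)\<^sup>2) + (\<Delta> x)\<^sup>2"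
      by (simp add: k Dd_def)
    have sE: "(\<Sum>j<m. (E j x)\<^sup>2) = (E 0 x)\<^sup>2 + (\<Sum>j<k. (E (Suc j) x)\<^sup>2)"
      unfolding k by (rule sum.lessThan_Suc_shift)
    have "\<bar>\<Delta> x\<bar> \<le> \<bar>f x (St x) \<theta> - f x (St' x) \<theta>\<bar> + \<bar>f x (St' x) \<theta> - f x (St' x) \<theta>'\<bar>"
      by (simp add: \<Delta>_def)
    also have "\<bar>f x (St x) \<theta> - f x (St' x) \<theta>\<bar> \<le> L * norm2 m (\<lambda>i. St x i - St' x i)"
      using lipY Ys(5) Zs(5) x by (simp add: St_def St'_def)
    also have "\<bar>f x (St' x) \<theta> - f x (St' x) \<theta>'\<bar> \<le> D"
      using lipT Zs(5) x by (auto simp: St'_def D_def)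
    finally have dl: "\<bar>\<Delta> x\<bar> \<le> L * sqrt (\<Sum>j<m. (E j x)\<^sup>2) + D" by (simp add: wE)
    show ?thesis unfolding sD c_def
      by (rule sqrt_lip_bound[OF _ L D _ _ dl]) (auto simp: sE sum_nonneg)
  qed
  have main: "sqrt (\<Sum>j<m. (E j x)\<^sup>2) \<le> (sqrt (\<Sum>j<m. (E j a0)\<^sup>2) + D / c) * exp (c * (x - a0)) - D / c"
    by (rule gronwall_vec[OF al c D _ _ x]) (auto simp: I_def[symmetric] intro: deriv bound)
  have e0: "sqrt (\<Sum>j<m. (E j a0)\<^sup>2) = norm2 m (\<lambda>i. Y0 i - Y0' i)"
  proof -
    have "Y0 j - Y0' j = E j a0" if "j < m" for j
      using that fun_cong[OF Ys(4), of j] fun_cong[OF Zs(4), of j] by (simp add: E_def)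
    then show ?thesis by (simp add: norm2_def)
  qed
  have "\<bar>y x - y' x\<bar> = \<bar>E 0 x\<bar>" using Ys(1) Zs(1) x by (simp add: E_def I_def)
  also have "\<dots> \<le> norm2 m (\<lambda>j. E j x)" using m norm2_coord[of 0 m "\<lambda>j. E j x"] by simp
  also have "\<dots> = sqrt (\<Sum>j<m. (E j x)\<^sup>2)" by (simp add: norm2_def)
  finally show ?thesis using main e0 by (simp add: D_def c_def)
qed

lemma int_exp:
  fixes c x :: real
  assumes c: "c > 0" and x: "x \<ge> 0"
  shows "integral {0..x} (\<lambda>s. exp (- s * c)) = (1 - exp (- x * c)) / c"
proof -
  have "((\<lambda>s. exp (- s * c)) has_integral ((\<lambda>s. - exp (- s * c) / c) x - (\<lambda>s. - exp (- s * c) / c) 0)) {0..x}"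
  proof (rule fundamental_theorem_of_calculus[OF x])
    fix s assume "s \<in> {0..x}"
    have "((\<lambda>s. - exp (- s * c) / c) has_real_derivative exp (- s * c)) (at s within {0..x})"
      using c by (auto intro!: derivative_eq_intros)
    then show "((\<lambda>s. - exp (- s * c) / c) has_vector_derivative exp (- s * c)) (at s within {0..x})"
      by (simp add: has_real_derivative_iff_has_vector_derivative)
  qed
  then show ?thesis using c by (simp add: integral_unique field_simps)
qed

lemma Lmax_bound:
  fixes c a0 \<alpha> t :: real
  assumes c: "c > 0" and a0: "a0 \<ge> 0" and t: "0 \<le> t" "t \<le> \<alpha>"
  shows "exp (c * t) * (1 + 1 / c) - 1 / c \<le>
         (SUP x\<in>{a0..a0 + \<alpha>}. exp (x * c) * (1 + integral {0..x} (\<lambda>s. exp (- s * c))))"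
proof -
  define H where "H u = exp (c * u) * (1 + 1 / c) - 1 / c" for u
  have Hmono: "H u \<le> H v" if "u \<le> v" for u v
    using that c by (auto simp: H_def intro!: mult_right_mono add_nonneg_nonneg)
  have Gf: "exp (x * c) * (1 + integral {0..x} (\<lambda>s. exp (- s * c))) = H x" if "x \<ge> 0" for x
  proof -
    have "exp (x * c) * exp (- x * c) = 1" by (simp add: exp_add[symmetric])
    then show ?thesis using that c unfolding int_exp[OF c that] by (simp add: H_def field_simps mult.commute)
  qed
  have bdd: "bdd_above ((\<lambda>x. exp (x * c) * (1 + integral {0..x} (\<lambda>s. exp (- s * c)))) ` {a0..a0 + \<alpha>})"
  proof (rule bdd_aboveI2)
    fix x assume "x \<in> {a0..a0 + \<alpha>}"
    then have x: "x \<ge> 0" "x \<le> a0 + \<alpha>" using a0 by auto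
    then show "exp (x * c) * (1 + integral {0..x} (\<lambda>s. exp (- s * c))) \<le> H (a0 + \<alpha>)"
      using Gf[OF x(1)] Hmono[OF x(2)] by simp
  qed
  have "H t \<le> H (a0 + t)" using a0 by (intro Hmono) simp
  also have "\<dots> = exp ((a0 + t) * c) * (1 + integral {0..a0 + t} (\<lambda>s. exp (- s * c)))"
    using a0 t Gf[of "a0 + t"] by simp
  also have "\<dots> \<le> (SUP x\<in>{a0..a0 + \<alpha>}. exp (x * c) * (1 + integral {0..x} (\<lambda>s. exp (- s * c))))"
    using t by (intro cSUP_upper bdd) auto
  finally show ?thesis by (simp add: H_def)
qed

lemma theta_cover:
  assumes q: "1 \<le> q" and K: "K \<ge> 1" and LK: "LK \<ge> 0" and e: "e > 0"
  shows "\<exists>C. finite C \<and> C \<subseteq> lq_ball q K \<and> real (card C) \<le> (1 + 2 * LK / e) ^ K \<and>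
          (\<forall>\<theta>\<in>lq_ball q K. \<exists>c\<in>C. LK * lq_norm q K (\<lambda>i. \<theta> i - c i) \<le> e)"
proof (cases "LK = 0")
  case True
  have z: "(\<lambda>_. 0) \<in> lq_ball q K"
  proof -
    have "lq_norm q K (\<lambda>_. 0) = lq_norm q K (\<lambda>i. 0 * (\<lambda>_. 0) i)" by simp
    also have "\<dots> = 0" using lq_hom[OF q, of K 0 "\<lambda>_. 0"] by simp
    finally show ?thesis by (simp add: lq_ball_def is_vec_def)
  qed
  show ?thesis using True z e by (intro exI[of _ "{\<lambda>_. 0}"]) auto
next
  case False
  then have LK: "LK > 0" using LK by simp
  have "\<exists>C. finite C \<and> C \<subseteq> lq_ball q K \<and> real (card C) \<le> (1 + 2 / (e / LK)) ^ K \<and>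
             (\<forall>v\<in>lq_ball q K. \<exists>c\<in>C. lq_norm q K (\<lambda>i. v i - c i) \<le> e / LK)"
  proof (rule covering[where Cb = 1 and rr = "1 / real K"])
    show "\<And>x y. (\<And>i. i < K \<Longrightarrow> x i = y i) \<Longrightarrow> lq_norm q K x = lq_norm q K y" by (rule lq_local)
    show "\<And>c x. lq_norm q K (\<lambda>i. c * x i) = \<bar>c\<bar> * lq_norm q K x" by (rule lq_hom[OF q])
    show "\<And>x y. lq_norm q K (\<lambda>i. x i + y i) \<le> lq_norm q K x + lq_norm q K y" by (rule lq_tri[OF q])
    show "\<And>x i. i < K \<Longrightarrow> \<bar>x i\<bar> \<le> 1 * lq_norm q K x" using lq_coord[OF q] by simp
    show "\<And>x. (\<And>i. i < K \<Longrightarrow> \<bar>x i\<bar> \<le> 1 / real K) \<Longrightarrow> lq_norm q K x \<le> 1" by (rule lq_small[OF q])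
    show "lq_norm q K \<in> borel_measurable (Pi\<^sub>M {..<K} (\<lambda>_. lborel))" by (rule lq_meas)
    show "0 < 1 / real K" using K by simp
    show "0 < e / LK" using e LK by simp
  qed (auto simp: lq_ball_def)
  then obtain C where C: "finite C" "C \<subseteq> lq_ball q K" "real (card C) \<le> (1 + 2 / (e / LK)) ^ K"
      "\<forall>v\<in>lq_ball q K. \<exists>c\<in>C. lq_norm q K (\<lambda>i. v i - c i) \<le> e / LK" by blast
  have "1 + 2 / (e / LK) = 1 + 2 * LK / e" by simp
  show ?thesis
  proof (intro exI[of _ C] conjI ballI)
    show "finite C" "C \<subseteq> lq_ball q K" using C by auto
    show "real (card C) \<le> (1 + 2 * LK / e) ^ K" using C(3) by simp
    fix \<theta> assume "\<theta> \<in> lq_ball q K"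
    then obtain c where "c \<in> C" "lq_norm q K (\<lambda>i. \<theta> i - c i) \<le> e / LK" using C(4) by blast
    then show "\<exists>c\<in>C. LK * lq_norm q K (\<lambda>i. \<theta> i - c i) \<le> e"
      using LK by (intro bexI[of _ c]) (auto simp: field_simps)
  qed
qed

lemma Y_cover:
  fixes C0 e :: real
  assumes C0: "C0 > 0" and m: "m \<ge> 1" and e: "e > 0"
  shows "\<exists>C. finite C \<and> C \<subseteq> {Y. is_vec m Y \<and> norm2 m Y \<le> C0} \<and> real (card C) \<le> (1 + 2 * C0 / e) ^ m \<and>
          (\<forall>Y\<in>{Y. is_vec m Y \<and> norm2 m Y \<le> C0}. \<exists>c\<in>C. norm2 m (\<lambda>i. Y i - c i) \<le> e)"
proof -
  define N where "N v = norm2 m v / C0" for v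
  have "\<exists>C. finite C \<and> C \<subseteq> {Y. is_vec m Y \<and> norm2 m Y \<le> C0} \<and> real (card C) \<le> (1 + 2 / (e / C0)) ^ m \<and>
             (\<forall>v\<in>{Y. is_vec m Y \<and> norm2 m Y \<le> C0}. \<exists>c\<in>C. N (\<lambda>i. v i - c i) \<le> e / C0)"
  proof (rule covering[where Cb = C0 and rr = "C0 / real m"])
    show "\<And>x y. (\<And>i. i < m \<Longrightarrow> x i = y i) \<Longrightarrow> N x = N y" unfolding N_def using norm2_local by metis
    show "\<And>c x. N (\<lambda>i. c * x i) = \<bar>c\<bar> * N x" unfolding N_def by (simp add: norm2_hom)
    show "\<And>x y. N (\<lambda>i. x i + y i) \<le> N x + N y" unfolding N_def using C0 norm2_tri
      by (metis add_divide_distrib divide_right_mono less_imp_le)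
    show "\<And>x i. i < m \<Longrightarrow> \<bar>x i\<bar> \<le> C0 * N x" unfolding N_def using C0 norm2_coord by simp
    show "\<And>x. (\<And>i. i < m \<Longrightarrow> \<bar>x i\<bar> \<le> C0 / real m) \<Longrightarrow> N x \<le> 1"
    proof -
      fix x assume h: "\<And>i. i < m \<Longrightarrow> \<bar>x i\<bar> \<le> C0 / real m"
      have "norm2 m (\<lambda>i. (1 / C0) * x i) \<le> 1"
      proof (rule norm2_small)
        fix i assume "i < m"
        then show "\<bar>1 / C0 * x i\<bar> \<le> 1 / real m" using h[of i] C0 by (simp add: field_simps abs_mult)
      qed
      then show "N x \<le> 1" using C0 norm2_hom[of m "1/C0" x] by (simp add: N_def)
    qed
    show "N \<in> borel_measurable (Pi\<^sub>M {..<m} (\<lambda>_. lborel))"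
      unfolding N_def[abs_def] by (intro borel_measurable_divide norm2_meas) auto
    show "0 < C0 / real m" using C0 m by simp
    show "0 < e / C0" using e C0 by simp
  qed (use C0 in \<open>auto simp: N_def\<close>)
  then obtain C where C: "finite C" "C \<subseteq> {Y. is_vec m Y \<and> norm2 m Y \<le> C0}" "real (card C) \<le> (1 + 2 / (e / C0)) ^ m"
      "\<forall>v\<in>{Y. is_vec m Y \<and> norm2 m Y \<le> C0}. \<exists>c\<in>C. N (\<lambda>i. v i - c i) \<le> e / C0" by blast
  show ?thesis
  proof (intro exI[of _ C] conjI ballI)
    show "finite C" "C \<subseteq> {Y. is_vec m Y \<and> norm2 m Y \<le> C0}" using C by auto
    show "real (card C) \<le> (1 + 2 * C0 / e) ^ m" using C(3) by simp
    fix Y assume "Y \<in> {Y. is_vec m Y \<and> norm2 m Y \<le> C0}"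
    then obtain c where "c \<in> C" "N (\<lambda>i. Y i - c i) \<le> e / C0" using C(4) by blast
    then show "\<exists>c\<in>C. norm2 m (\<lambda>i. Y i - c i) \<le> e"
      using C0 by (intro bexI[of _ c]) (auto simp: N_def divide_le_cancel)
  qed
qed

lemma alg_bound:
  fixes e0 D \<eta> c E :: real
  assumes "0 \<le> e0" "e0 \<le> \<eta>" "0 \<le> D" "D \<le> \<eta>" "c > 0" "E \<ge> 1"
  shows "(e0 + D / c) * E - D / c \<le> \<eta> * (E * (1 + 1 / c) - 1 / c)"
proof -
  have eq1: "(e0 + D / c) * E - D / c = e0 * E + D * ((E - 1) / c)" using assms(5) by (simp add: field_simps)
  have eq2: "\<eta> * (E * (1 + 1 / c) - 1 / c) = \<eta> * E + \<eta> * ((E - 1) / c)" using assms(5) by (simp add: field_simps)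
  have "e0 * E \<le> \<eta> * E" using assms by (intro mult_right_mono) auto
  moreover have "D * ((E - 1) / c) \<le> \<eta> * ((E - 1) / c)" using assms by (intro mult_right_mono) auto
  ultimately show ?thesis unfolding eq1 eq2 by linarith
qed

lemma zero_in_ball: "1 \<le> q \<Longrightarrow> (\<lambda>_. 0) \<in> lq_ball q K"
proof -
  assume q: "1 \<le> q"
  have "lq_norm q K (\<lambda>_. 0) = lq_norm q K (\<lambda>i. 0 * (\<lambda>_. 0) i)" by simp
  also have "\<dots> = 0" using lq_hom[OF q, of K 0 "\<lambda>_. 0"] by simp
  finally show ?thesis by (simp add: lq_ball_def is_vec_def)
qed

lemma main_bound:
  fixes m K :: nat and q :: ereal
    and a0 a b C0 M L LK :: real
    and f :: "real \<Rightarrow> (nat \<Rightarrow> real) \<Rightarrow> (nat \<Rightarrow> real) \<Rightarrow> real"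
  assumes "m \<ge> 1" "K \<ge> 1" "1 \<le> q"
    and "a0 \<ge> 0" "a > 0" "b > 0" "C0 > 0" "M > 0" "L \<ge> 0" "LK \<ge> 0"
    and lipY: "\<forall>\<theta>\<in>lq_ball q K. \<forall>x Y Y'. (x, Y) \<in> Gamma m a0 a b C0 \<longrightarrow> (x, Y') \<in> Gamma m a0 a b C0 \<longrightarrow>
                 \<bar>f x Y \<theta> - f x Y' \<theta>\<bar> \<le> L * norm2 m (\<lambda>i. Y i - Y' i)"
    and lipT: "\<forall>\<theta>\<in>lq_ball q K. \<forall>\<theta>'\<in>lq_ball q K. \<forall>(x, Y)\<in>Gamma m a0 a b C0.
                 \<bar>f x Y \<theta> - f x Y \<theta>'\<bar> \<le> LK * lq_norm q K (\<lambda>i. \<theta> i - \<theta>' i)"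
    and ex: "\<forall>\<theta>\<in>lq_ball q K. \<forall>Y0. is_vec m Y0 \<and> norm2 m Y0 \<le> C0 \<longrightarrow>
               (\<exists>y. is_solution m f (Gamma m a0 a b C0) \<theta> Y0 a0 (min a (b / M)) y)"
    and \<delta>: "\<delta> > 0"
    and \<alpha>_def: "\<alpha> = min a (b / M)"
    and Y_def: "\<Y> = {y. \<exists>\<theta>\<in>lq_ball q K. \<exists>Y0. is_vec m Y0 \<and> norm2 m Y0 \<le> C0 \<and>
                 is_solution m f (Gamma m a0 a b C0) \<theta> Y0 a0 \<alpha> y}"
    and Lmax_def: "Lmax = (SUP x\<in>{a0..a0 + \<alpha>}. exp (x * sqrt (L\<^sup>2 + 1)) *
                    (1 + integral {0..x} (\<lambda>s. exp (- s * sqrt (L\<^sup>2 + 1)))))"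
  shows "covering_number \<delta> {a0..a0 + \<alpha>} \<Y> \<noteq> \<infinity> \<and>
        ln (real (the_enat (covering_number \<delta> {a0..a0 + \<alpha>} \<Y>))) \<le> real K * ln (1 + 2 * Lmax * LK / \<delta>) + real m * ln (2 * C0 * Lmax / \<delta> + 1)"
proof -
  note hyp = assms(1-10)
  define G where "G = Gamma m a0 a b C0"
  define c where "c = sqrt (L\<^sup>2 + 1)"
  have c: "c > 0" by (simp add: c_def add_nonneg_pos)
  have \<alpha>: "\<alpha> > 0" using hyp by (simp add: \<alpha>_def)
  have LB: "exp (c * t) * (1 + 1 / c) - 1 / c \<le> Lmax" if "0 \<le> t" "t \<le> \<alpha>" for t
    unfolding Lmax_def c_def[symmetric] using Lmax_bound[OF c hyp(4) that] by simp
  have Lmax1: "Lmax \<ge> 1" using LB[of 0] \<alpha> c by simp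
  define \<eta> where "\<eta> = \<delta> / Lmax"
  have \<eta>: "\<eta> > 0" using \<delta> Lmax1 by (simp add: \<eta>_def)
  obtain C\<theta> where C\<theta>: "finite C\<theta>" "C\<theta> \<subseteq> lq_ball q K" "real (card C\<theta>) \<le> (1 + 2 * LK / \<eta>) ^ K"
      "\<forall>\<theta>\<in>lq_ball q K. \<exists>c\<in>C\<theta>. LK * lq_norm q K (\<lambda>i. \<theta> i - c i) \<le> \<eta>"
    using theta_cover[OF hyp(3) hyp(2) hyp(10) \<eta>] by blast
  obtain CY where CY: "finite CY" "CY \<subseteq> {Y. is_vec m Y \<and> norm2 m Y \<le> C0}" "real (card CY) \<le> (1 + 2 * C0 / \<eta>) ^ m"
      "\<forall>Y\<in>{Y. is_vec m Y \<and> norm2 m Y \<le> C0}. \<exists>c\<in>CY. norm2 m (\<lambda>i. Y i - c i) \<le> \<eta>"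
    using Y_cover[OF hyp(7) hyp(1) \<eta>] by blast
  define sol where "sol \<theta> Y = (SOME y. is_solution m f G \<theta> Y a0 \<alpha> y)" for \<theta> Y
  have sol: "is_solution m f G \<theta> Y (a0) \<alpha> (sol \<theta> Y)" if "\<theta> \<in> lq_ball q K" "is_vec m Y" "norm2 m Y \<le> C0" for \<theta> Y
  proof -
    have "\<exists>y. is_solution m f G \<theta> Y a0 \<alpha> y" using ex that unfolding G_def \<alpha>_def by blast
    then show ?thesis unfolding sol_def by (rule someI_ex)
  qed
  define Cy where "Cy = (\<lambda>(\<theta>, Y). sol \<theta> Y) ` (C\<theta> \<times> CY)"
  have Cy_fin: "finite Cy" using C\<theta>(1) CY(1) by (simp add: Cy_def)
  have Cy_sub: "Cy \<subseteq> \<Y>"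
  proof
    fix y assume "y \<in> Cy"
    then obtain \<theta> Y where tY: "\<theta> \<in> C\<theta>" "Y \<in> CY" "y = sol \<theta> Y" by (auto simp: Cy_def)
    then have "\<theta> \<in> lq_ball q K" "is_vec m Y" "norm2 m Y \<le> C0" using C\<theta>(2) CY(2) by auto
    then show "y \<in> \<Y>" using sol tY by (auto simp: Y_def G_def)
  qed
  have Cy_cov: "\<forall>y\<in>\<Y>. \<exists>z\<in>Cy. \<forall>x\<in>{a0..a0 + \<alpha>}. \<bar>y x - z x\<bar> \<le> \<delta>"
  proof
    fix y assume "y \<in> \<Y>"
    then obtain \<theta> Y0 where th: "\<theta> \<in> lq_ball q K" and Y0: "is_vec m Y0" "norm2 m Y0 \<le> C0"
        and ys: "is_solution m f G \<theta> Y0 a0 \<alpha> y" by (auto simp: Y_def G_def)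
    obtain \<theta>c where \<theta>c: "\<theta>c \<in> C\<theta>" "LK * lq_norm q K (\<lambda>i. \<theta> i - \<theta>c i) \<le> \<eta>" using C\<theta>(4) th by blast
    obtain Yc where Yc: "Yc \<in> CY" "norm2 m (\<lambda>i. Y0 i - Yc i) \<le> \<eta>" using CY(4) Y0 by blast
    have \<theta>cb: "\<theta>c \<in> lq_ball q K" and Ycb: "is_vec m Yc" "norm2 m Yc \<le> C0" using \<theta>c(1) Yc(1) C\<theta>(2) CY(2) by auto
    define z where "z = sol \<theta>c Yc"
    have zs: "is_solution m f G \<theta>c Yc a0 \<alpha> z" unfolding z_def by (rule sol[OF \<theta>cb Ycb])
    have zC: "z \<in> Cy" using \<theta>c(1) Yc(1) by (auto simp: Cy_def z_def)
    have "\<forall>x\<in>{a0..a0 + \<alpha>}. \<bar>y x - z x\<bar> \<le> \<delta>"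
    proof
      fix x assume x: "x \<in> {a0..a0 + \<alpha>}"
      define D where "D = LK * lq_norm q K (\<lambda>i. \<theta> i - \<theta>c i)"
      have D: "0 \<le> D" "D \<le> \<eta>" using \<theta>c(2) hyp(10) lq_nonneg by (auto simp: D_def)
      have lY: "\<forall>x Y Y'. (x, Y) \<in> G \<longrightarrow> (x, Y') \<in> G \<longrightarrow> \<bar>f x Y \<theta> - f x Y' \<theta>\<bar> \<le> L * norm2 m (\<lambda>i. Y i - Y' i)"
        using lipY th by (simp add: G_def)
      have lT: "\<forall>(x, Y)\<in>G. \<bar>f x Y \<theta> - f x Y \<theta>c\<bar> \<le> LK * lq_norm q K (\<lambda>i. \<theta> i - \<theta>c i)"
        using lipT th \<theta>cb by (simp add: G_def)
      have "\<bar>y x - z x\<bar> \<le> (norm2 m (\<lambda>i. Y0 i - Yc i) + D / c) * exp (c * (x - a0)) - D / c"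
        using stability[OF hyp(1) hyp(9) hyp(10) _ lY lT ys zs x] \<alpha> by (simp add: D_def c_def)
      also have "\<dots> \<le> \<eta> * (exp (c * (x - a0)) * (1 + 1 / c) - 1 / c)"
        using Yc(2) D c x by (intro alg_bound) (auto simp: norm2_nonneg)
      also have "\<dots> \<le> \<eta> * Lmax" using \<eta> LB[of "x - a0"] x by (intro mult_left_mono) auto
      also have "\<dots> = \<delta>" using Lmax1 by (simp add: \<eta>_def)
      finally show "\<bar>y x - z x\<bar> \<le> \<delta>" .
    qed
    then show "\<exists>z\<in>Cy. \<forall>x\<in>{a0..a0 + \<alpha>}. \<bar>y x - z x\<bar> \<le> \<delta>" using zC by blast
  qed
  define S where "S = {enat (card C) | C. finite C \<and> C \<subseteq> \<Y> \<and> (\<forall>y\<in>\<Y>. \<exists>c\<in>C. \<forall>x\<in>{a0..a0 + \<alpha>}. \<bar>y x - c x\<bar> \<le> \<delta>)}"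
  have N: "covering_number \<delta> {a0..a0 + \<alpha>} \<Y> = Inf S" by (simp add: covering_number_def S_def)
  have "enat (card Cy) \<in> S" using Cy_fin Cy_sub Cy_cov by (auto simp: S_def)
  then have Nle: "Inf S \<le> enat (card Cy)" by (rule Inf_lower)
  have Yne: "\<Y> \<noteq> {}"
  proof -
    have "is_vec m (\<lambda>_. 0)" "norm2 m (\<lambda>_. 0) \<le> C0" using hyp(7) by (auto simp: is_vec_def norm2_def)
    then obtain y where "is_solution m f G (\<lambda>_. 0) (\<lambda>_. 0) a0 \<alpha> y"
      using sol[OF zero_in_ball[OF hyp(3)]] by blast
    then have "y \<in> \<Y>" using zero_in_ball[OF hyp(3)] \<open>is_vec m (\<lambda>_. 0)\<close> \<open>norm2 m (\<lambda>_. 0) \<le> C0\<close>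
      by (auto simp: Y_def G_def)
    then show ?thesis by auto
  qed
  have Nge: "1 \<le> Inf S"
  proof (rule Inf_greatest)
    fix k assume "k \<in> S"
    then obtain C where C: "k = enat (card C)" "finite C" "\<forall>y\<in>\<Y>. \<exists>c\<in>C. \<forall>x\<in>{a0..a0 + \<alpha>}. \<bar>y x - c x\<bar> \<le> \<delta>"
      by (auto simp: S_def)
    then have "C \<noteq> {}" using Yne by auto
    then have "card C \<ge> 1" using C(2) by (simp add: Suc_le_eq card_gt_0_iff)
    then show "1 \<le> k" using C(1) by (simp add: one_enat_def)
  qed
  obtain k where k: "Inf S = enat k" using Nle by (cases "Inf S") auto
  have k1: "1 \<le> k" using Nge k by (simp add: one_enat_def)
  have kc: "k \<le> card Cy" using Nle k by simp
  define A where "A = 1 + 2 * Lmax * LK / \<delta>"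
  define B where "B = 2 * C0 * Lmax / \<delta> + 1"
  have A: "A \<ge> 1" using hyp(10) Lmax1 \<delta> by (simp add: A_def)
  have B: "B \<ge> 1" using hyp(7) Lmax1 \<delta> by (simp add: B_def)
  have cA: "real (card C\<theta>) \<le> A ^ K"
    using C\<theta>(3) Lmax1 \<delta> by (simp add: A_def \<eta>_def field_simps)
  have cB: "real (card CY) \<le> B ^ m"
    using CY(3) Lmax1 \<delta> by (simp add: B_def \<eta>_def field_simps)
  have "card Cy \<le> card (C\<theta> \<times> CY)" unfolding Cy_def by (rule card_image_le) (simp add: C\<theta>(1) CY(1))
  then have "card Cy \<le> card C\<theta> * card CY" by (simp add: card_cartesian_product)
  then have "real (card Cy) \<le> real (card C\<theta> * card CY)" by (simp only: of_nat_le_iff)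
  then have "real (card Cy) \<le> real (card C\<theta>) * real (card CY)" by simp
  also have "\<dots> \<le> A ^ K * B ^ m" using cA cB by (intro mult_mono) auto
  finally have cy: "real (card Cy) \<le> A ^ K * B ^ m" .
  have "ln (real k) \<le> ln (A ^ K * B ^ m)"
    using k1 kc cy A B by (subst ln_le_cancel_iff) auto
  also have "\<dots> = real K * ln A + real m * ln B"
    using A B by (simp add: ln_mult ln_realpow)
  finally show ?thesis using N k by (simp add: A_def B_def)
qed

theorem corollary2p1:
  fixes m K :: nat and q :: ereal
    and a0 a b C0 M L LK :: real
    and f :: "real \<Rightarrow> (nat \<Rightarrow> real) \<Rightarrow> (nat \<Rightarrow> real) \<Rightarrow> real"
  assumes "m \<ge> 1" "K \<ge> 1" "1 \<le> q"
    and "a0 \<ge> 0" "a > 0" "b > 0" "C0 > 0" "M > 0" "L \<ge> 0" "LK \<ge> 0"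
    and cont: "\<forall>\<theta>\<in>lq_ball q K. cont_on_Gamma m (Gamma m a0 a b C0) (\<lambda>x Y. f x Y \<theta>)"
    and bnd: "\<forall>\<theta>\<in>lq_ball q K. \<forall>(x, Y)\<in>Gamma m a0 a b C0. \<bar>f x Y \<theta>\<bar> \<le> M"
    and lipY: "\<forall>\<theta>\<in>lq_ball q K. \<forall>x Y Y'. (x, Y) \<in> Gamma m a0 a b C0 \<longrightarrow> (x, Y') \<in> Gamma m a0 a b C0 \<longrightarrow>
                 \<bar>f x Y \<theta> - f x Y' \<theta>\<bar> \<le> L * norm2 m (\<lambda>i. Y i - Y' i)"
    and lipT: "\<forall>\<theta>\<in>lq_ball q K. \<forall>\<theta>'\<in>lq_ball q K. \<forall>(x, Y)\<in>Gamma m a0 a b C0.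
                 \<bar>f x Y \<theta> - f x Y \<theta>'\<bar> \<le> LK * lq_norm q K (\<lambda>i. \<theta> i - \<theta>' i)"
    and ex: "\<forall>\<theta>\<in>lq_ball q K. \<forall>Y0. is_vec m Y0 \<and> norm2 m Y0 \<le> C0 \<longrightarrow>
               (\<exists>y. is_solution m f (Gamma m a0 a b C0) \<theta> Y0 a0 (min a (b / M)) y)"
  shows "\<forall>\<delta>>0.
    (let \<alpha> = min a (b / M);
         \<Y> = {y. \<exists>\<theta>\<in>lq_ball q K. \<exists>Y0. is_vec m Y0 \<and> norm2 m Y0 \<le> C0 \<and>
                 is_solution m f (Gamma m a0 a b C0) \<theta> Y0 a0 \<alpha> y};
         Lmax = (SUP x\<in>{a0..a0 + \<alpha>}. exp (x * sqrt (L\<^sup>2 + 1)) *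
                    (1 + integral {0..x} (\<lambda>s. exp (- s * sqrt (L\<^sup>2 + 1)))));
         N = covering_number \<delta> {a0..a0 + \<alpha>} \<Y>
     in N \<noteq> \<infinity> \<and>
        ln (real (the_enat N)) \<le> real K * ln (1 + 2 * Lmax * LK / \<delta>) + real m * ln (2 * C0 * Lmax / \<delta> + 1))"
    apply (intro allI impI)
  unfolding Let_def
  apply (rule main_bound[OF assms(1-10) lipY lipT ex _ refl refl refl])
  apply assumption
  done

end
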